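(* For every natural number $n\geq 1$, $\tau(B_n) > B_{\lfloor \tau(n)/3\rfloor}$, where $\lfloor\cdot\rfloor$ denotes the floor function.
   Context: The balancing numbers $(B_n)_{n\geq 0}$ are defined by $B_0=0$, $B_1=1$, $B_{n+1}=6B_n-B_{n-1}$ for $n\geq 1$. For a positive integer $m$, $\tau(m)$ denotes the number of positive divisors of $m$. *)

theory Defs
  imports Complex_Main
begin

fun balancing :: "nat \<Rightarrow> nat" where
  "balancing 0 = 0"
| "balancing (Suc 0) = 1"
| "balancing (Suc (Suc n)) = 6 * balancing (Suc n) - balancing n"

definition num_divisors :: "nat \<Rightarrow> nat" where
  "num_divisors m = card {d. d dvd m \<and> 0 < d}"

end

theory Submission
  imports Defs "HOL-Number_Theory.Number_Theory"
begin

lemma bal_mono: "balancing n \<le> balancing (Suc n)"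
  by (induction n) auto

definition bb :: "nat \<Rightarrow> int" where "bb n = int (balancing n)"
definition cc :: "nat \<Rightarrow> int" where "cc n = bb (Suc n) - 3 * bb n"

lemma bb0 [simp]: "bb 0 = 0" and bb1 [simp]: "bb (Suc 0) = 1"
  by (simp_all add: bb_def)

lemma bb_rec: "bb (Suc (Suc n)) = 6 * bb (Suc n) - bb n"
proof -
  have "balancing n \<le> 6 * balancing (Suc n)" using bal_mono[of n] by linarith
  then show ?thesis by (simp add: bb_def of_nat_diff)
qed

lemma bb2 [simp]: "bb 2 = 6"
  using bb_rec[of 0] by (simp add: numeral_2_eq_2)

lemma cc0 [simp]: "cc 0 = 1" and cc1 [simp]: "cc (Suc 0) = 3"
  by (simp_all add: cc_def numeral_2_eq_2[symmetric])

lemma bb_add: "bb (m + k) = bb m * cc k + cc m * bb k \<and> cc (m + k) = cc m * cc k + 8 * bb m * bb k"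
proof (induction k rule: balancing.induct)
  case 1
  then show ?case by simp
next
  case 2
  then show ?case by (simp add: cc_def bb_rec algebra_simps)
next
  case (3 k)
  have c: "cc (Suc (Suc j)) = 6 * cc (Suc j) - cc j" for j
    by (simp add: cc_def bb_rec)
  have I1: "bb (Suc (m + k)) = bb m * cc (Suc k) + cc m * bb (Suc k)"
    "cc (Suc (m + k)) = cc m * cc (Suc k) + 8 * bb m * bb (Suc k)"
    using 3(1) by simp_all
  have I0: "bb (m + k) = bb m * cc k + cc m * bb k" "cc (m + k) = cc m * cc k + 8 * bb m * bb k"
    using 3(2) by simp_all
  have "bb (Suc (Suc (m + k))) = bb m * cc (Suc (Suc k)) + cc m * bb (Suc (Suc k))"
    unfolding bb_rec c I1 I0 by (simp add: algebra_simps)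
  moreover have "cc (Suc (Suc (m + k))) = cc m * cc (Suc (Suc k)) + 8 * bb m * bb (Suc (Suc k))"
    unfolding bb_rec c I1 I0 by (simp add: algebra_simps)
  ultimately show ?case by simp
qed

lemma bb_Suc: "bb (Suc n) = 3 * bb n + cc n" and cc_Suc: "cc (Suc n) = 3 * cc n + 8 * bb n"
  using bb_add[of n 1] by simp_all

lemma pell: "cc n ^ 2 - 8 * bb n ^ 2 = 1"
proof (induction n)
  case 0 then show ?case by simp
next
  case (Suc n) then show ?case by (simp add: bb_Suc cc_Suc power2_eq_square algebra_simps)
qed

lemma bb_nonneg: "bb n \<ge> 0" by (simp add: bb_def)
lemma bb_pos: "n > 0 \<Longrightarrow> bb n > 0"
proof (induction n)
  case (Suc n) then show ?case using bal_mono[of n] by (cases n) (auto simp: bb_def)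
qed simp

lemma coprime_bc: "coprime (bb n) (cc n)"
proof (rule coprimeI)
  fix d assume "d dvd bb n" "d dvd cc n"
  then have "d dvd cc n ^ 2 - 8 * bb n ^ 2" by (simp add: power2_eq_square)
  then show "is_unit d" using pell[of n] by simp
qed

lemma gcd_shift: "gcd (bb (m + k)) (bb k) = gcd (bb m) (bb k)"
proof -
  have "gcd (bb (m + k)) (bb k) = gcd (bb m * cc k + cc m * bb k) (bb k)"
    using bb_add[of m k] by simp
  also have "\<dots> = gcd (bb k) (cc m * bb k + bb m * cc k)" by (simp add: gcd.commute add.commute)
  also have "\<dots> = gcd (bb k) (bb m * cc k)" by (rule gcd_add_mult)
  also have "\<dots> = gcd (bb m * cc k) (bb k)" by (simp add: gcd.commute)
  also have "\<dots> = gcd (bb m) (bb k)"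
    using coprime_bc[of k] by (simp add: gcd_mult_left_right_cancel coprime_commute)
  finally show ?thesis .
qed

lemma strong_div: "gcd (bb m) (bb k) = bb (gcd m k)"
proof (induction "m + k" arbitrary: m k rule: less_induct)
  case less
  show ?case
  proof (cases "m = 0 \<or> k = 0")
    case True
    then show ?thesis using bb_nonneg by auto
  next
    case False
    show ?thesis
    proof (cases "k \<le> m")
      case True
      have "gcd (bb m) (bb k) = gcd (bb (m - k + k)) (bb k)" using True by simp
      also have "\<dots> = gcd (bb (m - k)) (bb k)" by (rule gcd_shift)
      also have "\<dots> = bb (gcd (m - k) k)" using less False True by simp
      also have "gcd (m - k) k = gcd m k" using True
        by (metis gcd_add1 le_add_diff_inverse2)
      finally show ?thesis .
    next
      case F2: False
      have "gcd (bb m) (bb k) = gcd (bb (k - m + m)) (bb m)" using F2 by (simp add: gcd.commute)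
      also have "\<dots> = gcd (bb (k - m)) (bb m)" by (rule gcd_shift)
      also have "\<dots> = bb (gcd (k - m) m)" using less False F2 by simp
      also have "gcd (k - m) m = gcd m k" using F2
        by (metis gcd.commute gcd_add1 le_add_diff_inverse2 nat_le_linear)
      finally show ?thesis .
    qed
  qed
qed

lemma mult_struct:
  "\<exists>q. bb (m * k) = bb m * q \<and> bb m ^ 2 dvd (q - int k * cc m ^ (k - 1))
      \<and> bb m ^ 2 dvd (cc (m * k) - cc m ^ k)"
proof (induction k)
  case 0
  then show ?case by (intro exI[of _ 0]) simp
next
  case (Suc k)
  then obtain q where q: "bb (m * k) = bb m * q" "bb m ^ 2 dvd (q - int k * cc m ^ (k - 1))"
    "bb m ^ 2 dvd (cc (m * k) - cc m ^ k)" by blast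
  define q' where "q' = q * cc m + cc (m * k)"
  have e: "m * Suc k = m * k + m" by simp
  have kk: "int k * cc m ^ (k - 1) * cc m = int k * cc m ^ k" by (cases k) auto
  have "bb (m * Suc k) = bb m * q'"
    unfolding e q'_def using bb_add[of "m * k" m] q(1) by (simp add: algebra_simps)
  moreover have "q' - int (Suc k) * cc m ^ (Suc k - 1) =
      (q - int k * cc m ^ (k - 1)) * cc m + (cc (m * k) - cc m ^ k)"
    unfolding q'_def using kk by (simp add: algebra_simps)
  then have "bb m ^ 2 dvd (q' - int (Suc k) * cc m ^ (Suc k - 1))"
    using q(2,3) by simp
  moreover have "cc (m * Suc k) - cc m ^ Suc k = (cc (m * k) - cc m ^ k) * cc m + 8 * bb m ^ 2 * q"
    unfolding e using bb_add[of "m * k" m] q(1) by (simp add: algebra_simps power2_eq_square)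
  then have "bb m ^ 2 dvd (cc (m * Suc k) - cc m ^ Suc k)"
    using q(3) by simp
  ultimately show ?case by blast
qed

lemma bb_dvd_mult: "bb m dvd bb (m * k)"
  using mult_struct[of m k] by auto

lemma bb_dvd: "d dvd n \<Longrightarrow> bb d dvd bb n"
  using bb_dvd_mult by (auto elim!: dvdE)

lemma bal_pos: "n > 0 \<Longrightarrow> balancing n > 0"
  using bb_pos[of n] by (simp add: bb_def)

lemma p_not_dvd_cc:
  assumes "prime p" "int p dvd bb m"
  shows "\<not> int p dvd cc m"
proof
  assume "int p dvd cc m"
  then have "int p dvd cc m ^ 2 - 8 * bb m ^ 2" using assms(2) by (simp add: power2_eq_square)
  then have "int p dvd 1" using pell[of m] by simp
  moreover have "prime (int p)" using assms(1) by simp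
  ultimately show False using not_prime_unit by blast
qed

lemma mult_struct_nat:
  assumes "m > 0"
  obtains Q :: nat where "balancing (m * k) = balancing m * Q"
    "bb m ^ 2 dvd (int Q - int k * cc m ^ (k - 1))"
proof -
  obtain q where q: "bb (m * k) = bb m * q" "bb m ^ 2 dvd (q - int k * cc m ^ (k - 1))"
    using mult_struct[of m k] by blast
  have "q \<ge> 0"
  proof (rule ccontr)
    assume "\<not> q \<ge> 0"
    then have "bb m * q < 0" using bb_pos[OF assms] by (simp add: mult_pos_neg)
    then show False using q(1) bb_nonneg[of "m*k"] by simp
  qed
  then have "q = int (nat q)" by simp
  have "int (balancing (m * k)) = int (balancing m * nat q)"
    using q(1) \<open>q = int (nat q)\<close> by (simp add: bb_def)
  then have "balancing (m * k) = balancing m * nat q" by (simp only: of_nat_eq_iff)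
  moreover have "bb m ^ 2 dvd (int (nat q) - int k * cc m ^ (k - 1))"
    using q(2) \<open>q = int (nat q)\<close> by simp
  ultimately show ?thesis using that by blast
qed

lemma dvd_diff_l: "(x::int) dvd a - b \<Longrightarrow> x dvd a \<Longrightarrow> x dvd b"
proof -
  assume "x dvd a - b" "x dvd a"
  then have "x dvd a - (a - b)" by (simp only: dvd_diff)
  then show ?thesis by simp
qed
lemma dvd_diff_r: "(x::int) dvd a - b \<Longrightarrow> x dvd b \<Longrightarrow> x dvd a"
proof -
  assume "x dvd a - b" "x dvd b"
  then have "x dvd (a - b) + b" by (rule dvd_add)
  then show ?thesis by simp
qed

lemma lte:
  assumes p: "prime p" and m: "m > 0" and pm: "p dvd balancing m" and k: "k > 0"
  shows "multiplicity p (balancing (m * k)) = multiplicity p (balancing m) + multiplicity p k"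
  using m pm k
proof (induction k arbitrary: m rule: less_induct)
  case (less k)
  have pm': "int p dvd bb m" using less.prems(2) by (simp add: bb_def)
  show ?case
  proof (cases "p dvd k")
    case False
    obtain Q where Q: "balancing (m * k) = balancing m * Q" "bb m ^ 2 dvd (int Q - int k * cc m ^ (k - 1))"
      using mult_struct_nat[OF less.prems(1)] by blast
    have "int p dvd bb m ^ 2" using pm' by (simp add: power2_eq_square)
    then have d1: "int p dvd (int Q - int k * cc m ^ (k - 1))" using Q(2) dvd_trans by blast
    have "\<not> p dvd Q"
    proof
      assume "p dvd Q"
      then have "int p dvd int Q" by simp
      with d1 have "int p dvd int k * cc m ^ (k - 1)"
        by (rule dvd_diff_l)
      moreover have "prime (int p)" using p by simp
      ultimately have "int p dvd int k \<or> int p dvd cc m"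
        by (meson prime_dvd_mult_iff prime_dvd_power)
      then show False using False p_not_dvd_cc[OF p pm'] by simp
    qed
    then have "multiplicity p Q = 0" by (simp add: not_dvd_imp_multiplicity_0)
    moreover have "Q \<noteq> 0" using Q(1) bal_pos[of "m * k"] less.prems by auto
    moreover have "balancing m \<noteq> 0" using bal_pos[of m] less.prems by auto
    ultimately show ?thesis using Q(1) p False
      by (simp add: prime_elem_multiplicity_mult_distrib not_dvd_imp_multiplicity_0)
  next
    case True
    then obtain k' where k': "k = p * k'" by blast
    have p1: "p > 1" using p prime_gt_1_nat by blast
    have k'pos: "k' > 0" using k' less.prems(3) by (cases k') auto
    have k'lt: "k' < k" using k' k'pos p1 by simp
    define m' where "m' = m * k'"
    have m'pos: "m' > 0" using m'_def less.prems(1) k'pos by simp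
    have IH: "multiplicity p (balancing m') = multiplicity p (balancing m) + multiplicity p k'"
      using less.IH[OF k'lt less.prems(1,2) k'pos] m'_def by simp
    have "bb m dvd bb m'" unfolding m'_def by (rule bb_dvd_mult)
    then have pm'': "int p dvd bb m'" using pm' dvd_trans by blast
    obtain Q where Q: "balancing (m' * p) = balancing m' * Q" "bb m' ^ 2 dvd (int Q - int p * cc m' ^ (p - 1))"
      using mult_struct_nat[OF m'pos] by blast
    have "int p ^ 2 dvd bb m' ^ 2" using pm'' by (simp add: dvd_power_same)
    then have d1: "int p ^ 2 dvd (int Q - int p * cc m' ^ (p - 1))" using Q(2) dvd_trans by blast
    have d2: "int p dvd (int Q - int p * cc m' ^ (p - 1))"
      using d1 by (meson dvd_power dvd_trans zero_less_numeral)
    have "int p dvd int Q" using d2 by (rule dvd_diff_r) simp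
    then have pQ: "p dvd Q" by simp
    have npQ: "\<not> p ^ 2 dvd Q"
    proof
      assume "p ^ 2 dvd Q"
      then have "int p ^ 2 dvd int Q" by (metis of_nat_dvd_iff of_nat_power)
      with d1 have "int p ^ 2 dvd int p * cc m' ^ (p - 1)"
        by (rule dvd_diff_l)
      then have "int p * int p dvd int p * cc m' ^ (p - 1)" by (simp add: power2_eq_square)
      then have "int p dvd cc m' ^ (p - 1)" using p1 by simp
      moreover have "prime (int p)" using p by simp
      ultimately have "int p dvd cc m'" using prime_dvd_power by blast
      then show False using p_not_dvd_cc[OF p pm''] by simp
    qed
    have mQ: "multiplicity p Q = 1"
      by (rule multiplicity_eqI) (use pQ npQ in \<open>simp_all add: power2_eq_square\<close>)
    have "Q \<noteq> 0" using npQ by (metis dvd_0_right)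
    moreover have "balancing m' \<noteq> 0" using bal_pos[OF m'pos] by auto
    moreover have "m * k = m' * p" using k' m'_def by simp
    ultimately have "multiplicity p (balancing (m * k)) = multiplicity p (balancing m') + 1"
      using Q(1) mQ p by (simp add: prime_elem_multiplicity_mult_distrib)
    also have "\<dots> = multiplicity p (balancing m) + multiplicity p k"
      using IH k' k'pos p1 by (simp add: multiplicity_times_same)
    finally show ?thesis .
  qed
qed

lemma bal_dvd: "d dvd n \<Longrightarrow> balancing d dvd balancing n"
  using bb_dvd[of d n] by (simp add: bb_def)

lemma bal_gcd: "gcd (balancing a) (balancing b) = balancing (gcd a b)"
  using strong_div[of a b] by (simp add: bb_def gcd_int_int_eq)

definition rk :: "nat \<Rightarrow> nat" where "rk p = (LEAST m. 0 < m \<and> p dvd balancing m)"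

lemma rk_props:
  assumes "0 < n" "p dvd balancing n"
  shows "0 < rk p" "p dvd balancing (rk p)" "rk p \<le> n"
proof -
  have "0 < rk p \<and> p dvd balancing (rk p)"
    unfolding rk_def by (rule LeastI[of _ n]) (use assms in simp)
  then show "0 < rk p" "p dvd balancing (rk p)" by auto
  show "rk p \<le> n" unfolding rk_def by (rule Least_le) (use assms in simp)
qed

lemma rk_dvd_iff:
  assumes "0 < n" "p dvd balancing n"
  shows "p dvd balancing d \<longleftrightarrow> rk p dvd d"
proof
  assume "rk p dvd d"
  then show "p dvd balancing d" using rk_props(2)[OF assms] bal_dvd dvd_trans by blast
next
  assume pd: "p dvd balancing d"
  show "rk p dvd d"
  proof (cases "d = 0")
    case False
    have "p dvd gcd (balancing (rk p)) (balancing d)" using pd rk_props(2)[OF assms] by simp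
    then have pg: "p dvd balancing (gcd (rk p) d)" by (simp add: bal_gcd)
    have g0: "0 < gcd (rk p) d" using rk_props(1)[OF assms] by simp
    have "rk p \<le> gcd (rk p) d" by (rule rk_props(3)[OF g0 pg])
    moreover have "gcd (rk p) d \<le> rk p" using rk_props(1)[OF assms] by (simp add: gcd_le1_nat)
    ultimately have "gcd (rk p) d = rk p" by simp
    then show ?thesis by (metis gcd_dvd2)
  qed simp
qed

lemma v_formula:
  assumes p: "prime p" and n: "0 < n" "p dvd balancing n" and d: "0 < d"
  shows "multiplicity p (balancing d) =
    (if rk p dvd d then multiplicity p (balancing (rk p)) + multiplicity p (d div rk p) else 0)"
proof (cases "rk p dvd d")
  case True
  then obtain k where k: "d = rk p * k" by blast
  have k0: "k > 0" using k d by (cases k) auto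
  have "multiplicity p (balancing (rk p * k)) = multiplicity p (balancing (rk p)) + multiplicity p k"
    by (rule lte[OF p rk_props(1,2)[OF n] k0])
  then show ?thesis using True k rk_props(1)[OF n] by simp
next
  case False
  then have "\<not> p dvd balancing d" using rk_dvd_iff[OF n] by simp
  then show ?thesis using False by (simp add: not_dvd_imp_multiplicity_0)
qed

lemma prod_primes_dvd:
  fixes S :: "nat set"
  assumes "finite S" "\<forall>s\<in>S. prime s" "\<forall>s\<in>S. s dvd m"
  shows "\<Prod>S dvd m"
  using assms
proof (induction S rule: finite_induct)
  case (insert s S)
  have "coprime s (\<Prod>S)"
    using insert by (intro prod_coprime_right) (auto intro: primes_coprime)
  then show ?case using insert by (simp add: divides_mult)
qed simp

lemma prod_primes_dvd_iff:
  fixes S :: "nat set"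
  assumes "finite S" "\<forall>s\<in>S. prime s"
  shows "\<Prod>S dvd m \<longleftrightarrow> (\<forall>s\<in>S. s dvd m)"
  using prod_primes_dvd[OF assms] assms(1) by (meson dvd_prodI dvd_trans)

lemma mult_prod_primes:
  fixes S :: "nat set"
  assumes "finite S" "\<forall>s\<in>S. prime s" "prime p"
  shows "multiplicity p (\<Prod>S) = (if p \<in> S then 1 else 0)"
proof -
  have "0 \<notin> (\<lambda>x. x) ` S" using assms(2) by auto
  then have "multiplicity p (\<Prod>S) = (\<Sum>x\<in>S. multiplicity p x)"
    using assms by (simp add: prime_elem_multiplicity_prod_distrib)
  also have "\<dots> = (\<Sum>x\<in>S. if x = p then 1 else 0)"
  proof (intro sum.cong refl)
    fix x assume "x \<in> S"
    then have "prime x" using assms(2) by auto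
    show "multiplicity p x = (if x = p then 1 else 0)"
    proof (cases "x = p")
      case True then show ?thesis using assms(3) by simp
    next
      case False
      then have "\<not> p dvd x" using \<open>prime x\<close> assms(3) primes_dvd_imp_eq by blast
      then show ?thesis using False by (simp add: not_dvd_imp_multiplicity_0)
    qed
  qed
  also have "\<dots> = (if p \<in> S then 1 else 0)" using assms(1) by (simp add: sum.delta')
  finally show ?thesis .
qed

lemma ev_m1: "even (x::nat) \<Longrightarrow> 1 \<le> x \<Longrightarrow> odd (x - 1)" by (cases x) auto
lemma od_m1: "odd (x::nat) \<Longrightarrow> even (x - 1)" by (cases x) auto

definition tg :: "'a \<Rightarrow> 'a set \<Rightarrow> 'a set" where
  "tg q S = (if q \<in> S then S - {q} else insert q S)"

lemma tg_bij:
  assumes "finite P" "q \<in> P"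
  shows "bij_betw (tg q) {S\<in>Pow P. even (card S)} {S\<in>Pow P. odd (card S)}"
proof (rule bij_betw_byWitness[where f' = "tg q"])
  show "\<forall>S\<in>{S \<in> Pow P. even (card S)}. tg q (tg q S) = S"
    by (auto simp: tg_def insert_absorb)
  show "\<forall>S\<in>{S \<in> Pow P. odd (card S)}. tg q (tg q S) = S"
    by (auto simp: tg_def insert_absorb)
  have c: "S \<subseteq> P \<Longrightarrow> card (tg q S) = (if q \<in> S then card S - 1 else Suc (card S))" for S
    using assms by (auto simp: tg_def finite_subset)
  have c1: "S \<subseteq> P \<Longrightarrow> q \<in> S \<Longrightarrow> card S \<ge> 1" for S
    using assms by (metis One_nat_def Suc_leI card_gt_0_iff empty_iff finite_subset)
  show "tg q ` {S \<in> Pow P. even (card S)} \<subseteq> {S \<in> Pow P. odd (card S)}"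
  proof
    fix T assume "T \<in> tg q ` {S \<in> Pow P. even (card S)}"
    then obtain S where S: "S \<subseteq> P" "even (card S)" "T = tg q S" by auto
    then have "T \<subseteq> P" using assms by (auto simp: tg_def)
    moreover have "odd (card T)"
    proof (cases "q \<in> S")
      case True then show ?thesis using S c[OF S(1)] c1[OF S(1)] ev_m1 by simp
    next
      case False then show ?thesis using S c[OF S(1)] by simp
    qed
    ultimately show "T \<in> {S \<in> Pow P. odd (card S)}" by simp
  qed
  show "tg q ` {S \<in> Pow P. odd (card S)} \<subseteq> {S \<in> Pow P. even (card S)}"
  proof
    fix T assume "T \<in> tg q ` {S \<in> Pow P. odd (card S)}"
    then obtain S where S: "S \<subseteq> P" "odd (card S)" "T = tg q S" by auto
    then have "T \<subseteq> P" using assms by (auto simp: tg_def)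
    moreover have "even (card T)"
    proof (cases "q \<in> S")
      case True then show ?thesis using S c[OF S(1)] od_m1 by simp
    next
      case False then show ?thesis using S c[OF S(1)] by simp
    qed
    ultimately show "T \<in> {S \<in> Pow P. even (card S)}" by simp
  qed
qed


lemma div_dvd_self_nat: "(a::nat) dvd n \<Longrightarrow> n div a dvd n"
  by (metis dvd_div_mult_self dvd_triv_left)

lemma val_step:
  assumes n2: "2 \<le> n"
    and H: "\<And>p. prime p \<Longrightarrow> p dvd balancing n \<Longrightarrow> \<exists>m. 0 < m \<and> m < n \<and> p dvd balancing m"
  shows "(\<Prod>S\<in>{S\<in>Pow (prime_factors n). even (card S)}. balancing (n div \<Prod>S)) dvd
     (\<Prod>S\<in>{S\<in>Pow (prime_factors n). odd (card S)}. balancing (n div \<Prod>S)) * \<Prod>(prime_factors n)"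
proof -
  define P where "P = prime_factors n"
  define Ev where "Ev = {S\<in>Pow P. even (card S)}"
  define Od where "Od = {S\<in>Pow P. odd (card S)}"
  define D where "D S = n div \<Prod>S" for S :: "nat set"
  have n0: "0 < n" using n2 by simp
  have fP: "finite P" unfolding P_def by simp
  have prP: "\<forall>s\<in>P. prime s" unfolding P_def by auto
  have dvP: "\<forall>s\<in>P. s dvd n" unfolding P_def by auto
  have fS: "S \<subseteq> P \<Longrightarrow> finite S" for S using fP finite_subset by blast
  have dvdS: "S \<subseteq> P \<Longrightarrow> \<Prod>S dvd n" for S
    using prod_primes_dvd[of S n] fS prP dvP by blast
  have pS: "S \<subseteq> P \<Longrightarrow> 0 < \<Prod>S" for S
    using prP by (intro prod_pos) (auto intro: prime_gt_0_nat)
  have D0: "S \<subseteq> P \<Longrightarrow> 0 < D S" for S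
    unfolding D_def using dvdS[of S] pS[of S] n0 by (simp add: div_greater_zero_iff dvd_imp_le)
  have DS: "S \<subseteq> P \<Longrightarrow> D S dvd n" for S
    unfolding D_def using dvdS div_dvd_self_nat by blast
  have fEv: "finite Ev" "finite Od" unfolding Ev_def Od_def using fP by auto
  have bpos: "S \<subseteq> P \<Longrightarrow> balancing (D S) > 0" for S using D0 bal_pos by blast
  have nz: "0 \<notin> (\<lambda>S. balancing (D S)) ` Ev" "0 \<notin> (\<lambda>S. balancing (D S)) ` Od"
  proof -
    show "0 \<notin> (\<lambda>S. balancing (D S)) ` Ev"
    proof
      assume "0 \<in> (\<lambda>S. balancing (D S)) ` Ev"
      then obtain S where "S \<in> Ev" "0 = balancing (D S)" by blast
      then show False using bpos[of S] unfolding Ev_def by simp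
    qed
    show "0 \<notin> (\<lambda>S. balancing (D S)) ` Od"
    proof
      assume "0 \<in> (\<lambda>S. balancing (D S)) ` Od"
      then obtain S where "S \<in> Od" "0 = balancing (D S)" by blast
      then show False using bpos[of S] unfolding Od_def by simp
    qed
  qed
  have Xnz: "(\<Prod>S\<in>Ev. balancing (D S)) \<noteq> 0"
    using bpos unfolding Ev_def by (intro prod_pos[THEN less_not_refl3[symmetric]]) auto
  have Ynz: "(\<Prod>S\<in>Od. balancing (D S)) \<noteq> 0"
    using bpos unfolding Od_def by (intro prod_pos[THEN less_not_refl3[symmetric]]) auto
  have Rnz: "\<Prod>P \<noteq> 0" using pS[of P] by simp
  have main: "multiplicity p (\<Prod>S\<in>Ev. balancing (D S)) \<le>
      multiplicity p ((\<Prod>S\<in>Od. balancing (D S)) * \<Prod>P)" if p: "prime p" for p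
  proof -
    define v where "v S = multiplicity p (balancing (D S))" for S
    have mX: "multiplicity p (\<Prod>S\<in>Ev. balancing (D S)) = (\<Sum>S\<in>Ev. v S)"
      unfolding v_def using p nz(1) fEv(1) by (simp add: prime_elem_multiplicity_prod_distrib)
    have mY: "multiplicity p (\<Prod>S\<in>Od. balancing (D S)) = (\<Sum>S\<in>Od. v S)"
      unfolding v_def using p nz(2) fEv(2) by (simp add: prime_elem_multiplicity_prod_distrib)
    have mR: "multiplicity p (\<Prod>P) = (if p \<in> P then 1 else 0)"
      by (rule mult_prod_primes[OF fP prP p])
    have mYR: "multiplicity p ((\<Prod>S\<in>Od. balancing (D S)) * \<Prod>P) = (\<Sum>S\<in>Od. v S) + (if p \<in> P then 1 else 0)"
      using p Ynz Rnz mY mR by (simp add: prime_elem_multiplicity_mult_distrib)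
    show ?thesis
    proof (cases "p dvd balancing n")
      case False
      have "v S = 0" if "S \<in> Ev" for S
      proof -
        have "balancing (D S) dvd balancing n" using that DS bal_dvd unfolding Ev_def by blast
        then have "\<not> p dvd balancing (D S)" using False dvd_trans by blast
        then show ?thesis unfolding v_def by (simp add: not_dvd_imp_multiplicity_0)
      qed
      then show ?thesis using mX mYR by simp
    next
      case pn: True
      define r where "r = rk p"
      have r0: "0 < r" and pr: "p dvd balancing r" using rk_props[OF n0 pn] r_def by auto
      obtain m where m: "0 < m" "m < n" "p dvd balancing m" using H[OF p pn] by blast
      have rn: "r < n" using rk_props(3)[OF m(1,3)] m(2) r_def by simp
      have rdn: "r dvd n" using rk_dvd_iff[OF n0 pn, of n] r_def pn by simp
      define t where "t = n div r"
      have nrt: "n = r * t" using rdn t_def by simp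
      have t1: "t > 1" using nrt rn r0 by (cases t) auto
      define a where "a = multiplicity p (balancing r)"
      define T where "T = {q\<in>P. q dvd t}"
      define w where "w S = (if S \<subseteq> T then a + (multiplicity p t - (if p \<in> S then 1 else 0)) else 0)" for S
      have vw: "v S = w S" if SP: "S \<subseteq> P" for S
      proof -
        have vf: "v S = (if r dvd D S then a + multiplicity p (D S div r) else 0)"
          unfolding v_def a_def r_def by (rule v_formula[OF p n0 pn D0[OF SP]])
        have pnz: "\<Prod>S \<noteq> 0" using pS[OF SP] by simp
        have "r dvd D S \<longleftrightarrow> r * \<Prod>S dvd n"
          unfolding D_def using dvd_div_iff_mult[OF pnz dvdS[OF SP]] .
        also have "\<dots> \<longleftrightarrow> \<Prod>S * r dvd n" by (simp add: mult.commute)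
        also have "\<dots> \<longleftrightarrow> \<Prod>S dvd t"
          unfolding t_def using dvd_div_iff_mult[of r n "\<Prod>S"] r0 rdn by simp
        also have "\<dots> \<longleftrightarrow> (\<forall>s\<in>S. s dvd t)"
          using prod_primes_dvd_iff[OF fS[OF SP]] prP SP by blast
        also have "\<dots> \<longleftrightarrow> S \<subseteq> T" unfolding T_def using SP by auto
        finally have iff: "r dvd D S \<longleftrightarrow> S \<subseteq> T" .
        show ?thesis
        proof (cases "S \<subseteq> T")
          case False then show ?thesis using vf iff w_def by simp
        next
          case True
          have Sdt: "\<Prod>S dvd t" using True unfolding T_def
            using prod_primes_dvd[OF fS[OF SP]] prP SP by blast
          have "D S div r = n div (\<Prod>S * r)" unfolding D_def by (simp add: div_mult2_eq)
          also have "\<dots> = t div \<Prod>S" unfolding t_def by (simp add: div_mult2_eq mult.commute)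
          finally have e1: "D S div r = t div \<Prod>S" .
          have tt: "t = (t div \<Prod>S) * \<Prod>S" using Sdt by simp
          have "t div \<Prod>S \<noteq> 0" using tt t1 by (metis mult_0 not_one_less_zero)
          then have "multiplicity p t = multiplicity p (t div \<Prod>S) + multiplicity p (\<Prod>S)"
            using p pnz by (subst tt) (simp add: prime_elem_multiplicity_mult_distrib)
          moreover have "multiplicity p (\<Prod>S) = (if p \<in> S then 1 else 0)"
            by (rule mult_prod_primes[OF fS[OF SP] _ p]) (use prP SP in auto)
          ultimately have "multiplicity p (D S div r) = multiplicity p t - (if p \<in> S then 1 else 0)"
            using e1 by simp
          then show ?thesis using vf iff True w_def by simp
        qed
      qed
      have sE: "(\<Sum>S\<in>Ev. v S) = (\<Sum>S\<in>Ev. w S)" using vw unfolding Ev_def by (intro sum.cong) auto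
      have sO: "(\<Sum>S\<in>Od. v S) = (\<Sum>S\<in>Od. w S)" using vw unfolding Od_def by (intro sum.cong) auto
      obtain q0 where q0: "prime q0" "q0 dvd t" using t1 prime_factor_nat[of t] by auto
      have q0P: "q0 \<in> P" unfolding P_def using q0 n0 nrt by (auto simp: in_prime_factors_iff)
      have q0T: "q0 \<in> T" unfolding T_def using q0P q0 by simp
      show ?thesis
      proof (cases "\<exists>q\<in>T. q \<noteq> p")
        case True
        then obtain q where q: "q \<in> T" "q \<noteq> p" by blast
        have qP: "q \<in> P" using q T_def by simp
        have bij: "bij_betw (tg q) Ev Od" unfolding Ev_def Od_def by (rule tg_bij[OF fP qP])
        have "(\<Sum>S\<in>Od. w S) = (\<Sum>S\<in>Ev. w (tg q S))"
          using sum.reindex_bij_betw[OF bij, of w] by simp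
        also have "\<dots> = (\<Sum>S\<in>Ev. w S)"
        proof (intro sum.cong refl)
          fix S assume "S \<in> Ev"
          have "tg q S \<subseteq> T \<longleftrightarrow> S \<subseteq> T" using q(1) by (auto simp: tg_def)
          moreover have "p \<in> tg q S \<longleftrightarrow> p \<in> S" using q(2) by (auto simp: tg_def)
          ultimately show "w (tg q S) = w S" unfolding w_def by simp
        qed
        finally show ?thesis using mX mYR sE sO by simp
      next
        case False
        then have "T \<subseteq> {p}" by blast
        then have Tp: "T = {p}" using q0T by blast
        have pP: "p \<in> P" using Tp by (auto simp: T_def)
        have pt: "p dvd t" using Tp by (auto simp: T_def)
        have nu: "\<not> is_unit p" using p not_prime_unit by blast
        have mt: "multiplicity p t \<ge> 1"
          using multiplicity_geI[of t p 1] pt t1 nu by simp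
        have bij: "bij_betw (tg p) Ev Od" unfolding Ev_def Od_def by (rule tg_bij[OF fP pP])
        have ineq: "w S \<le> w (tg p S) + (if S = {} then 1 else 0)" if "S \<in> Ev" for S
        proof (cases "S \<subseteq> T")
          case False then show ?thesis by (simp add: w_def)
        next
          case True
          then have "S = {} \<or> S = {p}" using Tp by auto
          moreover have "S \<noteq> {p}" using that unfolding Ev_def by auto
          ultimately have "S = {}" by blast
          then show ?thesis using Tp mt by (simp add: w_def tg_def)
        qed
        have e0: "{} \<in> Ev" unfolding Ev_def by simp
        have "(\<Sum>S\<in>Ev. w S) \<le> (\<Sum>S\<in>Ev. w (tg p S) + (if S = {} then 1 else 0))"
          by (rule sum_mono) (rule ineq)
        also have "\<dots> = (\<Sum>S\<in>Ev. w (tg p S)) + 1"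
          using fEv(1) e0 by (simp add: sum.distrib)
        also have "(\<Sum>S\<in>Ev. w (tg p S)) = (\<Sum>S\<in>Od. w S)"
          using sum.reindex_bij_betw[OF bij, of w] by simp
        finally show ?thesis using mX mYR sE sO pP by simp
      qed
    qed
  qed
  have "(\<Prod>S\<in>Ev. balancing (D S)) dvd (\<Prod>S\<in>Od. balancing (D S)) * \<Prod>P"
    by (rule multiplicity_le_imp_dvd[OF Xnz main])
  then show ?thesis unfolding Ev_def Od_def D_def P_def .
qed

definition al :: real where "al = 3 + 2 * sqrt 2"
definition be :: real where "be = 3 - 2 * sqrt 2"

lemma s2: "sqrt 2 * sqrt 2 = (2::real)" by simp

lemma al_sq: "al ^ 2 = 6 * al - 1" unfolding al_def by (simp add: power2_eq_square algebra_simps s2)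
lemma be_sq: "be ^ 2 = 6 * be - 1" unfolding be_def by (simp add: power2_eq_square algebra_simps s2)

lemma bb_closed: "real_of_int (bb n) = (al ^ n - be ^ n) / (4 * sqrt 2)"
proof (induction n rule: balancing.induct)
  case 1 then show ?case by simp
next
  case 2 then show ?case by (simp add: al_def be_def)
next
  case (3 n)
  have A: "x ^ Suc (Suc n) = 6 * x ^ Suc n - x ^ n" if "x ^ 2 = 6 * x - 1" for x :: real
  proof -
    have "x ^ Suc (Suc n) = x ^ n * x ^ 2" by (simp add: power2_eq_square)
    also have "\<dots> = x ^ n * (6 * x - 1)" by (simp only: that)
    also have "\<dots> = 6 * x ^ Suc n - x ^ n" by (simp add: algebra_simps)
    finally show ?thesis .
  qed
  have "al ^ Suc (Suc n) = 6 * al ^ Suc n - al ^ n" by (rule A[OF al_sq])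
  moreover have "be ^ Suc (Suc n) = 6 * be ^ Suc n - be ^ n" by (rule A[OF be_sq])
  ultimately show ?case using 3 by (simp add: bb_rec diff_divide_distrib)
qed

lemma bal_closed: "real (balancing n) = (al ^ n - be ^ n) / (4 * sqrt 2)"
  using bb_closed[of n] by (simp add: bb_def)

lemma be_pos: "0 < be" and be_le1: "be \<le> 1" and al_ge: "al \<ge> 4 * sqrt 2" and al_be: "al - be = 4 * sqrt 2"
proof -
  have "2 * sqrt 2 < 3"
  proof -
    have "(2 * sqrt 2) ^ 2 < (3::real) ^ 2" by (simp add: power2_eq_square)
    then show ?thesis by (rule power_less_imp_less_base) simp
  qed
  then show "0 < be" unfolding be_def by simp
  have "1 \<le> sqrt (2::real)" by simp
  then show "be \<le> 1" unfolding be_def by simp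
  show "al \<ge> 4 * sqrt 2" unfolding al_def using \<open>2 * sqrt 2 < 3\<close> by simp
  show "al - be = 4 * sqrt 2" unfolding al_def be_def by simp
qed

lemma s4_ge5: "4 * sqrt 2 \<ge> (5::real)"
proof -
  have "(5::real) ^ Suc 1 \<le> (4 * sqrt 2) ^ Suc 1" by (simp add: power2_eq_square)
  then show ?thesis by (rule power_le_imp_le_base) simp
qed

lemma al_pos: "al > 0" using al_ge s4_ge5 by simp

lemma bal_upper: "real (balancing d) \<le> al ^ d / (4 * sqrt 2)"
  unfolding bal_closed using be_pos by (intro divide_right_mono) auto

lemma bal_lower: assumes "d \<ge> 1" shows "al ^ (d - 1) \<le> real (balancing d)"
proof -
  have "be ^ d \<le> be" using be_pos be_le1 assms by (simp add: power_le_one power_decreasing[of 1 d be, simplified])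
  also have "be \<le> be * al ^ (d - 1)"
    using be_pos al_ge s4_ge5 by (simp add: one_le_power)
  finally have "be ^ d \<le> be * al ^ (d - 1)" .
  moreover have "al ^ d = al * al ^ (d - 1)" using assms by (metis Suc_diff_le diff_Suc_1 power_Suc)
  ultimately have "al ^ (d - 1) * (al - be) \<le> al ^ d - be ^ d" by (simp add: algebra_simps)
  then have "al ^ (d - 1) * (4 * sqrt 2) \<le> al ^ d - be ^ d" using al_be by simp
  then show ?thesis unfolding bal_closed by (simp add: field_simps)
qed

lemma sum_identity:
  assumes n0: "0 < n"
  shows "(\<Sum>S\<in>{S\<in>Pow (prime_factors n). even (card S)}. n div \<Prod>S) =
         totient n + (\<Sum>S\<in>{S\<in>Pow (prime_factors n). odd (card S)}. n div \<Prod>S)"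
proof -
  define P where "P = prime_factors n"
  define Ev where "Ev = {S\<in>Pow P. even (card S)}"
  define Od where "Od = {S\<in>Pow P. odd (card S)}"
  have fP: "finite P" unfolding P_def by simp
  have prP: "\<forall>s\<in>P. prime s" unfolding P_def by auto
  have dvP: "\<forall>s\<in>P. s dvd n" unfolding P_def by auto
  have fS: "S \<subseteq> P \<Longrightarrow> finite S" for S using fP finite_subset by blast
  have dvdS: "S \<subseteq> P \<Longrightarrow> \<Prod>S dvd n" for S
    using prod_primes_dvd[of S n] fS prP dvP by blast
  have trm: "(\<Prod>q\<in>X. - 1 / real q) * (\<Prod>q\<in>P - X. 1) * real n = (-1) ^ card X * real (n div \<Prod>X)"
    if X: "X \<subseteq> P" for X
  proof -
    have "(\<Prod>q\<in>X. - 1 / real q) = (\<Prod>q\<in>X. (-1) * inverse (real q))"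
      by (simp add: divide_inverse)
    also have "\<dots> = (\<Prod>q\<in>X. (-1::real)) * (\<Prod>q\<in>X. inverse (real q))"
      by (rule prod.distrib)
    also have "(\<Prod>q\<in>X. inverse (real q)) = inverse (\<Prod>q\<in>X. real q)"
      using prod_inversef[of real X] by (simp add: o_def)
    also have "(\<Prod>q\<in>X. real q) = real (\<Prod>X)" by simp
    also have "(\<Prod>q\<in>X. (-1::real)) = (-1) ^ card X" by simp
    finally have "(\<Prod>q\<in>X. - 1 / real q) * (\<Prod>q\<in>P - X. 1) * real n = (-1) ^ card X * (real n / real (\<Prod>X))"
      by (simp add: divide_inverse)
    also have "real n / real (\<Prod>X) = real (n div \<Prod>X)"
      using dvdS[OF X] by (simp add: real_of_nat_div)
    finally show ?thesis .
  qed
  have "real (totient n) = real n * (\<Prod>p\<in>P. 1 - 1 / real p)"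
    unfolding P_def by (rule totient_formula2)
  also have "(\<Prod>p\<in>P. 1 - 1 / real p) = (\<Prod>p\<in>P. (- 1 / real p) + 1)" by simp
  also have "\<dots> = (\<Sum>X\<in>Pow P. (\<Prod>q\<in>X. - 1 / real q) * (\<Prod>q\<in>P - X. 1))"
    by (rule prod_add[OF fP])
  also have "real n * \<dots> = (\<Sum>X\<in>Pow P. (\<Prod>q\<in>X. - 1 / real q) * (\<Prod>q\<in>P - X. 1) * real n)"
    by (simp add: sum_distrib_left mult.commute)
  also have "\<dots> = (\<Sum>X\<in>Pow P. (-1) ^ card X * real (n div \<Prod>X))"
    by (intro sum.cong refl trm) simp
  also have "Pow P = Ev \<union> Od" unfolding Ev_def Od_def by auto
  also have "(\<Sum>X\<in>Ev \<union> Od. (-1) ^ card X * real (n div \<Prod>X)) =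
      (\<Sum>X\<in>Ev. (-1) ^ card X * real (n div \<Prod>X)) + (\<Sum>X\<in>Od. (-1) ^ card X * real (n div \<Prod>X))"
    by (rule sum.union_disjoint) (auto simp: Ev_def Od_def fP)
  also have "(\<Sum>X\<in>Ev. (-1) ^ card X * real (n div \<Prod>X)) = (\<Sum>X\<in>Ev. real (n div \<Prod>X))"
    by (intro sum.cong refl) (auto simp: Ev_def)
  also have "(\<Sum>X\<in>Od. (-1) ^ card X * real (n div \<Prod>X)) = - (\<Sum>X\<in>Od. real (n div \<Prod>X))"
    by (subst sum_negf[symmetric]) (intro sum.cong refl, auto simp: Od_def)
  finally have "real (totient n) = real (\<Sum>X\<in>Ev. n div \<Prod>X) - real (\<Sum>X\<in>Od. n div \<Prod>X)"
    by simp
  then have "real (\<Sum>X\<in>Ev. n div \<Prod>X) = real (totient n + (\<Sum>X\<in>Od. n div \<Prod>X))" by simp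
  then show ?thesis unfolding Ev_def Od_def P_def by (simp only: of_nat_eq_iff)
qed

lemma card_ev_le:
  fixes P :: "nat set"
  assumes fP: "finite P" and prP: "\<forall>q\<in>P. prime q"
  shows "card {S\<in>Pow P. even (card S)} \<le> (\<Prod>q\<in>P. q - 1)"
proof -
  define Ev where "Ev = {S\<in>Pow P. even (card S)}"
  have inj: "inj_on (\<lambda>S. S - {2}) Ev"
  proof (rule inj_onI)
    fix S S' assume S: "S \<in> Ev" "S' \<in> Ev" and eq: "S - {2} = S' - {2}"
    have fin: "finite S" "finite S'" using S fP finite_subset unfolding Ev_def by auto
    have c1: False if "2 \<in> S" "2 \<notin> S'" "S - {2} = S' - {2}" "finite S" "finite S'"
      "even (card S)" "even (card S')" for S S' :: "nat set"
    proof -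
      have "S = insert 2 S'" using that by blast
      then have "card S = Suc (card S')" using that by simp
      then show False using that by simp
    qed
    show "S = S'"
    proof (cases "2 \<in> S \<longleftrightarrow> 2 \<in> S'")
      case True then show ?thesis using eq by blast
    next
      case False
      then show ?thesis using c1[of S S'] c1[of S' S] eq fin S unfolding Ev_def by auto
    qed
  qed
  have "(\<lambda>S. S - {2}) ` Ev \<subseteq> Pow (P - {2})" unfolding Ev_def by auto
  then have "card Ev \<le> card (Pow (P - {2}))"
    using card_inj_on_le[OF inj] fP by auto
  also have "\<dots> = 2 ^ card (P - {2})" using fP by (simp add: card_Pow)
  also have "\<dots> = (\<Prod>q\<in>P - {2}. 2)" by simp
  also have "\<dots> \<le> (\<Prod>q\<in>P - {2}. q - 1)"
  proof (rule prod_mono)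
    fix q assume "q \<in> P - {2}"
    then have "prime q" "q \<noteq> 2" using prP by auto
    then have "q \<ge> 3" using prime_ge_2_nat[of q] by linarith
    then show "0 \<le> (2::nat) \<and> 2 \<le> q - 1" by simp
  qed
  also have "\<dots> \<le> (\<Prod>q\<in>P. q - 1)"
  proof (cases "2 \<in> P")
    case True
    then have "(\<Prod>q\<in>P. q - 1) = (2 - 1) * (\<Prod>q\<in>P - {2}. q - 1)"
      using fP by (simp add: prod.remove)
    then show ?thesis by simp
  qed simp
  finally show ?thesis unfolding Ev_def .
qed

lemma phi0_le:
  assumes "0 < n"
  shows "(\<Prod>q\<in>prime_factors n. q - 1) \<le> totient n"
  unfolding totient_formula1[OF assms]
proof (rule prod_mono)
  fix q assume "q \<in> prime_factors n"
  then have "q > 0" by (auto intro: prime_gt_0_nat)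
  then show "0 \<le> q - 1 \<and> q - 1 \<le> q ^ (multiplicity q n - 1) * (q - 1)" by simp
qed

lemma q_le5: "3 \<le> q \<Longrightarrow> q \<le> (5::nat) ^ (q - 2)"
proof (induction q rule: dec_induct)
  case base then show ?case by simp
next
  case (step q)
  have "Suc q \<le> 5 * q" using step by simp
  also have "\<dots> \<le> 5 * 5 ^ (q - 2)" using step by simp
  also have "Suc q - 2 = Suc (q - 2)" using step by simp
  then have "5 * 5 ^ (q - 2) = (5::nat) ^ (Suc q - 2)" by simp
  finally show ?case .
qed

lemma pow5:
  fixes A :: "nat set"
  assumes "finite A" "\<forall>q\<in>A. prime q \<and> q \<noteq> 2"
  shows "5 * \<Prod>A \<le> 5 ^ (\<Prod>q\<in>A. q - 1)"
  using assms
proof (induction A rule: finite_induct)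
  case empty then show ?case by simp
next
  case (insert q A)
  define M where "M = (\<Prod>q\<in>A. q - 1)"
  have q3: "q \<ge> 3" using insert.prems prime_ge_2_nat[of q] by force
  have M1: "M \<ge> 1" unfolding M_def using insert.prems
    by (intro prod_ge_1) (auto dest!: prime_ge_2_nat)
  have IH: "5 * \<Prod>A \<le> 5 ^ M" using insert M_def by auto
  have "5 * \<Prod>(insert q A) = (5 * \<Prod>A) * q" using insert by simp
  also have "\<dots> \<le> 5 ^ M * 5 ^ (q - 2)" using IH q_le5[OF q3] by (rule mult_le_mono)
  also have "(5::nat) ^ (q - 2) \<le> (5 ^ M) ^ (q - 2)"
  proof (rule power_mono)
    show "(5::nat) \<le> 5 ^ M" using M1
      by (cases M) auto
  qed simp
  also have "(5::nat) ^ M * (5 ^ M) ^ (q - 2) = 5 ^ (M + M * (q - 2))"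
    by (simp add: power_mult[symmetric] power_add)
  also have "M + M * (q - 2) = M * (q - 1)"
  proof -
    have "q - 1 = Suc (q - 2)" using q3 by simp
    then show ?thesis by simp
  qed
  also have "M * (q - 1) = (\<Prod>q\<in>insert q A. q - 1)" using insert M_def by simp
  finally show ?case by simp
qed

lemma rad_lt:
  assumes "0 < n"
  shows "\<Prod>(prime_factors n) < 5 ^ (\<Prod>q\<in>prime_factors n. q - 1)"
proof -
  define P where "P = prime_factors n"
  have fP: "finite P" unfolding P_def by simp
  have prP: "\<forall>s\<in>P. prime s" unfolding P_def by auto
  have pos: "0 < \<Prod>(P - {2})" using prP by (intro prod_pos) (auto intro: prime_gt_0_nat)
  have b: "5 * \<Prod>(P - {2}) \<le> 5 ^ (\<Prod>q\<in>P - {2}. q - 1)"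
    using prP fP by (intro pow5) auto
  show ?thesis
  proof (cases "2 \<in> P")
    case True
    have "\<Prod>P = 2 * \<Prod>(P - {2})" using True fP by (simp add: prod.remove)
    moreover have "(\<Prod>q\<in>P. q - 1) = (\<Prod>q\<in>P - {2}. q - 1)" using True fP by (simp add: prod.remove)
    ultimately show ?thesis using b pos unfolding P_def[symmetric] by simp
  next
    case False
    then have "P - {2} = P" by simp
    then show ?thesis using b pos unfolding P_def[symmetric] by simp
  qed
qed

lemma primitive:
  assumes n2: "2 \<le> n"
  shows "\<exists>p. prime p \<and> p dvd balancing n \<and> (\<forall>m. 0 < m \<and> m < n \<longrightarrow> \<not> p dvd balancing m)"
proof (rule ccontr)
  assume "\<not> ?thesis"
  then have H: "\<And>p. prime p \<Longrightarrow> p dvd balancing n \<Longrightarrow> \<exists>m. 0 < m \<and> m < n \<and> p dvd balancing m"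
    by blast
  define P where "P = prime_factors n"
  define Ev where "Ev = {S\<in>Pow P. even (card S)}"
  define Od where "Od = {S\<in>Pow P. odd (card S)}"
  define D where "D S = n div \<Prod>S" for S :: "nat set"
  define X where "X = (\<Prod>S\<in>Ev. balancing (D S))"
  define Y where "Y = (\<Prod>S\<in>Od. balancing (D S))"
  define R where "R = \<Prod>P"
  define N where "N = card Ev"
  define ph where "ph = totient n"
  define c :: real where "c = 4 * sqrt 2"
  have n0: "0 < n" using n2 by simp
  have fP: "finite P" unfolding P_def by simp
  have prP: "\<forall>s\<in>P. prime s" unfolding P_def by auto
  have dvP: "\<forall>s\<in>P. s dvd n" unfolding P_def by auto
  have fS: "S \<subseteq> P \<Longrightarrow> finite S" for S using fP finite_subset by blast
  have dvdS: "S \<subseteq> P \<Longrightarrow> \<Prod>S dvd n" for S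
    using prod_primes_dvd[of S n] fS prP dvP by blast
  have pS: "S \<subseteq> P \<Longrightarrow> 0 < \<Prod>S" for S
    using prP by (intro prod_pos) (auto intro: prime_gt_0_nat)
  have D0: "S \<subseteq> P \<Longrightarrow> 1 \<le> D S" for S
    unfolding D_def using dvdS[of S] pS[of S] n0 by (simp add: div_greater_zero_iff dvd_imp_le Suc_le_eq)
  have fEv: "finite Ev" "finite Od" unfolding Ev_def Od_def using fP by auto
  have XdY: "X dvd Y * R" using val_step[OF n2 H] unfolding X_def Y_def R_def Ev_def Od_def D_def P_def .
  have Ypos: "Y > 0" unfolding Y_def Od_def using D0 bal_pos
    by (intro prod_pos) (auto simp: Suc_le_eq)
  have Rpos: "R > 0" unfolding R_def using pS by simp
  have XleYR: "X \<le> Y * R" using XdY Ypos Rpos by (intro dvd_imp_le) auto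
  obtain q0 where q0: "prime q0" "q0 dvd n" using n2 prime_factor_nat[of n] by auto
  have q0P: "q0 \<in> P" unfolding P_def using q0 n0 by (auto simp: in_prime_factors_iff)
  have NO: "card Od = N" unfolding N_def Ev_def Od_def
    using bij_betw_same_card[OF tg_bij[OF fP q0P]] by simp
  have al1: "al \<ge> 1" using al_ge s4_ge5 by simp
  have K1: "real X * al ^ N \<ge> al ^ (\<Sum>S\<in>Ev. D S)"
  proof -
    have "al ^ (\<Sum>S\<in>Ev. D S) = (\<Prod>S\<in>Ev. al ^ D S)" by (rule power_sum)
    also have "\<dots> = (\<Prod>S\<in>Ev. al ^ (D S - 1) * al)"
    proof (intro prod.cong refl)
      fix S assume "S \<in> Ev"
      then have "1 \<le> D S" using D0 unfolding Ev_def by auto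
      then show "al ^ D S = al ^ (D S - 1) * al" by (metis One_nat_def Suc_diff_le diff_Suc_1 power_Suc2)
    qed
    also have "\<dots> = (\<Prod>S\<in>Ev. al ^ (D S - 1)) * al ^ N"
      unfolding N_def by (simp add: prod.distrib)
    also have "(\<Prod>S\<in>Ev. al ^ (D S - 1)) \<le> real X"
      unfolding X_def of_nat_prod
    proof (rule prod_mono)
      fix S assume "S \<in> Ev"
      then have "1 \<le> D S" using D0 unfolding Ev_def by auto
      then show "0 \<le> al ^ (D S - 1) \<and> al ^ (D S - 1) \<le> real (balancing (D S))"
        using bal_lower al_pos by auto
    qed
    then have "(\<Prod>S\<in>Ev. al ^ (D S - 1)) * al ^ N \<le> real X * al ^ N"
      using al_pos by (intro mult_right_mono) auto
    finally show ?thesis .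
  qed
  have K2: "real Y * c ^ N \<le> al ^ (\<Sum>S\<in>Od. D S)"
  proof -
    have cpos: "c > 0" unfolding c_def by simp
    have "real Y = (\<Prod>S\<in>Od. real (balancing (D S)))" unfolding Y_def by simp
    also have "\<dots> \<le> (\<Prod>S\<in>Od. al ^ D S / c)"
      by (rule prod_mono) (use bal_upper c_def in auto)
    also have "\<dots> = (\<Prod>S\<in>Od. al ^ D S) / c ^ N"
      using NO by (simp add: prod_dividef)
    also have "\<dots> = al ^ (\<Sum>S\<in>Od. D S) / c ^ N" by (simp add: power_sum)
    finally show ?thesis using cpos by (simp add: field_simps)
  qed
  have sumid: "(\<Sum>S\<in>Ev. D S) = ph + (\<Sum>S\<in>Od. D S)"
    unfolding Ev_def Od_def D_def P_def ph_def by (rule sum_identity[OF n0])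
  have Nph: "N \<le> ph"
    using card_ev_le[OF fP prP] phi0_le[OF n0] unfolding N_def Ev_def ph_def P_def by linarith
  have K4: "c ^ (ph - N) \<le> al ^ (ph - N)"
    using al_ge c_def by (intro power_mono) auto
  have K5: "real R < c ^ ph"
  proof -
    have "R < 5 ^ (\<Prod>q\<in>P. q - 1)" unfolding R_def P_def by (rule rad_lt[OF n0])
    also have "(5::nat) ^ (\<Prod>q\<in>P. q - 1) \<le> 5 ^ ph"
      using phi0_le[OF n0] unfolding P_def ph_def by (intro power_increasing) auto
    finally have "real R < 5 ^ ph" by (metis of_nat_less_iff of_nat_numeral of_nat_power)
    also have "(5::real) ^ ph \<le> c ^ ph" using s4_ge5 c_def by (intro power_mono) auto
    finally show ?thesis .
  qed
  have "al ^ N * (real Y * real R) < al ^ N * (real Y * c ^ ph)"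
    using K5 Ypos al_pos by simp
  also have "\<dots> = al ^ N * c ^ (ph - N) * (real Y * c ^ N)"
    using Nph by (simp add: algebra_simps power_add[symmetric])
  also have "\<dots> \<le> al ^ N * al ^ (ph - N) * al ^ (\<Sum>S\<in>Od. D S)"
    using K2 K4 al_pos c_def Ypos
    by (intro mult_mono) (auto intro: mult_nonneg_nonneg)
  also have "\<dots> = al ^ (\<Sum>S\<in>Ev. D S)"
    using sumid Nph by (simp add: power_add[symmetric])
  also have "\<dots> \<le> real X * al ^ N" by (rule K1)
  finally have "real Y * real R < real X" using al_pos by (simp add: mult.commute)
  then have "Y * R < X" by (metis of_nat_less_iff of_nat_mult)
  then show False using XleYR by simp
qed

lemma omega_bound:
  assumes n1: "1 \<le> n"
  shows "num_divisors n - 1 \<le> card (prime_factors (balancing n))"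
proof -
  define Dv where "Dv = {d. d dvd n \<and> 1 < d}"
  define f where "f d = (SOME p. prime p \<and> p dvd balancing d \<and> (\<forall>m. 0 < m \<and> m < d \<longrightarrow> \<not> p dvd balancing m))" for d
  have fprop: "prime (f d) \<and> f d dvd balancing d \<and> (\<forall>m. 0 < m \<and> m < d \<longrightarrow> \<not> f d dvd balancing m)"
    if "d \<in> Dv" for d
  proof -
    have "2 \<le> d" using that Dv_def by auto
    from primitive[OF this] show ?thesis unfolding f_def by (rule someI_ex)
  qed
  have bn: "balancing n \<noteq> 0" using bal_pos[of n] n1 by simp
  have img: "f ` Dv \<subseteq> prime_factors (balancing n)"
  proof
    fix p assume "p \<in> f ` Dv"
    then obtain d where d: "d \<in> Dv" "p = f d" by blast
    have "balancing d dvd balancing n" using d Dv_def bal_dvd by auto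
    then show "p \<in> prime_factors (balancing n)"
      using fprop[OF d(1)] d(2) bn dvd_trans by (auto simp: in_prime_factors_iff)
  qed
  have inj: "inj_on f Dv"
  proof (rule inj_onI)
    fix a b assume ab: "a \<in> Dv" "b \<in> Dv" "f a = f b"
    show "a = b"
    proof (rule ccontr)
      assume "a \<noteq> b"
      then have "a < b \<or> b < a" by linarith
      then show False
      proof
        assume "a < b"
        then show False using fprop[OF ab(1)] fprop[OF ab(2)] ab(3) ab(1) Dv_def by auto
      next
        assume "b < a"
        then show False using fprop[OF ab(1)] fprop[OF ab(2)] ab(3) ab(2) Dv_def by auto
      qed
    qed
  qed
  have "card Dv \<le> card (prime_factors (balancing n))"
    using card_inj_on_le[OF inj img] by simp
  moreover have "{d. d dvd n \<and> 0 < d} = insert 1 Dv" unfolding Dv_def using n1 by auto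
  moreover have "finite Dv" unfolding Dv_def using n1 finite_divisors_nat[of n] by (auto intro: finite_subset)
  moreover have "1 \<notin> Dv" unfolding Dv_def by simp
  ultimately show ?thesis unfolding num_divisors_def by simp
qed

lemma tau_bound:
  assumes m0: "0 < m"
  shows "2 ^ card (prime_factors m) \<le> num_divisors m"
proof -
  define P where "P = prime_factors m"
  have fP: "finite P" unfolding P_def by simp
  have prP: "\<forall>s\<in>P. prime s" unfolding P_def by auto
  have dvP: "\<forall>s\<in>P. s dvd m" unfolding P_def by auto
  have fS: "S \<subseteq> P \<Longrightarrow> finite S" for S using fP finite_subset by blast
  have inj: "inj_on Prod (Pow P)"
  proof (rule inj_onI)
    fix S S' assume S: "S \<in> Pow P" "S' \<in> Pow P" "\<Prod>S = \<Prod>S'"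
    have sub: "q \<in> S'" if "q \<in> S" "S \<in> Pow P" "S' \<in> Pow P" "\<Prod>S = \<Prod>S'" for q S S'
    proof -
      have pq: "prime q" using that prP by auto
      have aS: "\<forall>x\<in>S. prime x" "\<forall>x\<in>S'. prime x" using that prP by auto
      have fSS: "finite S" "finite S'" using that fS by auto
      have m1: "multiplicity q (\<Prod>S) = 1" using mult_prod_primes[OF fSS(1) aS(1) pq] that(1) by simp
      have "multiplicity q (\<Prod>S') = 1" using m1 unfolding that(4) .
      then have "(if q \<in> S' then 1 else 0) = (1::nat)" unfolding mult_prod_primes[OF fSS(2) aS(2) pq] .
      then show ?thesis by (cases "q \<in> S'") auto
    qed
    have "S \<subseteq> S'" using sub[OF _ S(1,2,3)] by blast
    moreover have "S' \<subseteq> S" using sub[OF _ S(2,1) S(3)[symmetric]] by blast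
    ultimately show "S = S'" by blast
  qed
  have img: "Prod ` Pow P \<subseteq> {d. d dvd m \<and> 0 < d}"
  proof
    fix d assume "d \<in> Prod ` Pow P"
    then obtain S where S: "S \<subseteq> P" "d = \<Prod>S" by auto
    have "\<Prod>S dvd m" using prod_primes_dvd[of S m] fS[OF S(1)] prP dvP S(1) by blast
    moreover have "0 < \<Prod>S" using prP S(1) by (intro prod_pos) (auto intro: prime_gt_0_nat)
    ultimately show "d \<in> {d. d dvd m \<and> 0 < d}" using S by simp
  qed
  have fin: "finite {d. d dvd m \<and> 0 < d}" using finite_divisors_nat[OF m0] by (auto intro: finite_subset)
  have "card (Pow P) \<le> card {d. d dvd m \<and> 0 < d}" using card_inj_on_le[OF inj img fin] .
  then show ?thesis unfolding num_divisors_def P_def using fP card_Pow[of P] P_def by simp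
qed

lemma bal_le6: "1 \<le> k \<Longrightarrow> balancing k \<le> 6 ^ (k - 1)"
proof (induction k rule: dec_induct)
  case base then show ?case by simp
next
  case (step k)
  have "balancing (Suc k) \<le> 6 * balancing k"
  proof (cases k)
    case (Suc j) then show ?thesis by simp
  qed (use step in simp)
  also have "\<dots> \<le> 6 * 6 ^ (k - 1)" using step by simp
  also have "\<dots> = 6 ^ (Suc k - 1)" using step by (cases k) auto
  finally show ?case .
qed

theorem theorem3p2:
  fixes n :: nat
  assumes "n \<ge> 1"
  shows "num_divisors (balancing n) > balancing (nat \<lfloor>real (num_divisors n) / 3\<rfloor>)"
proof -
  define t where "t = num_divisors n"
  define k where "k = t div 3"
  have kk: "nat \<lfloor>real (num_divisors n) / 3\<rfloor> = k"
    unfolding k_def t_def using floor_divide_of_nat_eq[where 'a=real, of "num_divisors n" 3] by simp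
  have t1: "t \<ge> 1"
  proof -
    have "finite {d. d dvd n \<and> 0 < d}" using finite_divisors_nat[of n] assms by (auto intro: finite_subset)
    moreover have "1 \<in> {d. d dvd n \<and> 0 < d}" by simp
    ultimately have "card {d. d dvd n \<and> 0 < d} > 0" by (subst card_gt_0_iff) blast
    then show ?thesis unfolding t_def num_divisors_def by simp
  qed
  have bpos: "0 < balancing n" using bal_pos assms by simp
  have "2 ^ (t - 1) \<le> (2::nat) ^ card (prime_factors (balancing n))"
    using omega_bound[OF assms] unfolding t_def by (intro power_increasing) auto
  also have "\<dots> \<le> num_divisors (balancing n)" by (rule tau_bound[OF bpos])
  finally have A: "2 ^ (t - 1) \<le> num_divisors (balancing n)" .
  have B: "balancing k < 2 ^ (t - 1)"
  proof (cases "k = 0")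
    case True then show ?thesis by simp
  next
    case False
    have "balancing k \<le> 6 ^ (k - 1)" using False bal_le6 by simp
    also have "\<dots> \<le> 8 ^ (k - 1)" by (intro power_mono) auto
    also have "\<dots> < 4 * 8 ^ (k - 1)" by simp
    also have "4 * 8 ^ (k - 1) = (2::nat) ^ (3 * (k - 1) + 2)"
      by (simp add: power_add power_mult)
    also have "\<dots> \<le> 2 ^ (t - 1)"
      using False k_def by (intro power_increasing) auto
    finally show ?thesis .
  qed
  show ?thesis using A B kk by simp
qed

end
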